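(* Let $n$ be a positive even integer and let $\lambda_n$ be the Lebesgue function of polynomial interpolation in $\mathbb{P}^2_n$ at the Morrow-Patterson points $MP_n$. Then $\lambda_n(x,y)=\lambda_n(-x,y)$ for all $(x,y)\in Q=[-1,1]^2$.
   Context: $\mathbb{P}^2_n$ is the space of real bivariate polynomials of total degree at most $n$. The Morrow-Patterson points are $MP_n=\{(x_m,y_{m,k}) : m=1,\dots,n+1,\ k=1,\dots,\tfrac n2+1\}$ with $x_m=\cos\frac{m\pi}{n+2}$ and $y_{m,k}=\cos\frac{2k\pi}{n+3}$ if $m$ is odd, $y_{m,k}=\cos\frac{(2k-1)\pi}{n+3}$ if $m$ is even; this set is unisolvent for $\mathbb{P}^2_n$. The Lebesgue function is $\lambda_n(x,y)=\sum_{a\in MP_n}|\ell_a(x,y)|$, where $\ell_a\in\mathbb{P}^2_n$ are the Lagrange basis polynomials with $\ell_a(b)=\delta_{ab}$ for $a,b\in MP_n$. *)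

theory Defs
  imports Complex_Main
begin

definition P2 :: "nat \<Rightarrow> (real \<times> real \<Rightarrow> real) set" where
  "P2 n = {f. \<exists>c :: nat \<Rightarrow> nat \<Rightarrow> real.
             \<forall>x y. f (x, y) = (\<Sum>i\<le>n. \<Sum>j\<le>n - i. c i j * x ^ i * y ^ j)}"

definition MP :: "nat \<Rightarrow> (real \<times> real) set" where
  "MP n = {(cos (real m * pi / real (n + 2)),
            if odd m then cos (2 * real k * pi / real (n + 3))
            else cos ((2 * real k - 1) * pi / real (n + 3))) | m k.
           1 \<le> m \<and> m \<le> n + 1 \<and> 1 \<le> k \<and> k \<le> n div 2 + 1}"

text \<open>Lagrange basis polynomial for the node a (well defined by unisolvence).\<close>
definition lagrange_basis :: "nat \<Rightarrow> real \<times> real \<Rightarrow> (real \<times> real \<Rightarrow> real)" where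
  "lagrange_basis n a = (THE p. p \<in> P2 n \<and> (\<forall>b\<in>MP n. p b = (if b = a then 1 else 0)))"

definition lebesgue_fun :: "nat \<Rightarrow> real \<Rightarrow> real \<Rightarrow> real" where
  "lebesgue_fun n x y = (\<Sum>a\<in>MP n. \<bar>lagrange_basis n a (x, y)\<bar>)"

end

theory Submission imports Defs "HOL-Computational_Algebra.Polynomial" "Jordan_Normal_Form.Determinant"
begin

fun cheb :: "nat \<Rightarrow> real poly" where
  "cheb 0 = 1"
| "cheb (Suc 0) = [:0, 1:]"
| "cheb (Suc (Suc k)) = [:0, 2:] * cheb (Suc k) - cheb k"

lemma cheb_cos: "poly (cheb k) (cos t) = cos (real k * t)"
proof (induction k rule: cheb.induct)
  case (3 k)
  have "cos (real (Suc (Suc k)) * t) = 2 * cos t * cos (real (Suc k) * t) - cos (real k * t)"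
    using cos_times_cos[of t "real (Suc k) * t"] by (simp add: algebra_simps)
  then show ?case using 3 by simp
qed auto

lemma cheb_deg_coeff: "degree (cheb k) \<le> k \<and> coeff (cheb k) k = (if k = 0 then 1 else 2 ^ (k - 1))"
proof (induction k rule: cheb.induct)
  case (3 k)
  have e: "[:0, 2:] * cheb (Suc k) = pCons 0 (smult 2 (cheb (Suc k)))"
    by (simp add: mult_pCons_left)
  have d1: "degree ([:0, 2:] * cheb (Suc k)) \<le> Suc (Suc k)" unfolding e
    using 3 by (simp add: degree_pCons_le)
  have d2: "degree (cheb k) \<le> Suc (Suc k)" using 3 by simp
  have "degree (cheb (Suc (Suc k))) \<le> Suc (Suc k)"
    using degree_diff_le[OF d1 d2] by simp
  moreover have "coeff (cheb k) (Suc (Suc k)) = 0" using 3 by (simp add: coeff_eq_0)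
  ultimately show ?case using 3 by (simp add: e)
qed auto

lemma cheb_degree: "degree (cheb k) = k"
  using cheb_deg_coeff[of k] by (metis le_antisym le_degree power_not_zero zero_neq_numeral one_neq_zero)

lemma cheb_nz: "cheb k \<noteq> 0"
  using cheb_deg_coeff[of k] by (metis coeff_0 power_not_zero zero_neq_numeral one_neq_zero)

lemma cos_per_nat: "cos (x + real q * (2*pi)) = cos x"
proof (induction q)
  case (Suc q)
  have "cos (x + real (Suc q) * (2*pi)) = cos ((x + real q * (2*pi)) + 2 * pi)" by (simp add: algebra_simps)
  also have "\<dots> = cos x" using Suc by (simp only: cos_periodic)
  finally show ?case .
qed simp

lemma cos_reduce:
  fixes s N :: nat
  assumes N: "N > 0" and nd: "\<not> N dvd s"
  shows "\<exists>m. 1 \<le> m \<and> m < N \<and> (even m \<longleftrightarrow> even s) \<and> cos (real s * pi / real N) = cos (real m * pi / real N)"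
proof -
  define r q where "r = s mod (2*N)" and "q = s div (2*N)"
  have s: "s = q*(2*N) + r" using div_mult_mod_eq[of s "2*N"] by (simp add: r_def q_def)
  have "real s * pi / N = real r * pi / N + real q * (2*pi)"
    using N by (subst s) (simp add: field_simps)
  hence c: "cos (real s * pi / N) = cos (real r * pi / N)" by (simp add: cos_per_nat)
  have r2: "r < 2*N" using N by (simp add: r_def)
  have r0: "r \<noteq> 0"
  proof
    assume "r = 0"
    then have "s = N * (2*q)" using s by simp
    then show False using nd by simp
  qed
  have rN: "r \<noteq> N"
  proof
    assume "r = N"
    then have "s = N * (2*q+1)" using s by (simp add: algebra_simps)
    then show False using nd by simp
  qed
  have ev: "even r \<longleftrightarrow> even s" using s by simp
  show ?thesis
  proof (cases "r < N")
    case True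
    then show ?thesis using r0 ev c by (intro exI[of _ r]) auto
  next
    case False
    define m where "m = 2*N - r"
    have m: "1 \<le> m" "m < N" using False rN r2 by (auto simp: m_def)
    have "real r * pi / N = 2 * pi - real m * pi / N"
      using N False r2 by (simp add: m_def of_nat_diff field_simps)
    then have "cos (real r * pi / N) = cos (real m * pi / N)" by simp
    moreover have "even m \<longleftrightarrow> even r" using False r2 by (auto simp: m_def)
    ultimately show ?thesis using m ev c by (intro exI[of _ m]) auto
  qed
qed

definition pt :: "nat \<Rightarrow> nat \<Rightarrow> nat \<Rightarrow> real \<times> real" where
  "pt n m k = (cos (real m * pi / real (n + 2)),
            if odd m then cos (2 * real k * pi / real (n + 3))
            else cos ((2 * real k - 1) * pi / real (n + 3)))"

lemma MP_eq: "MP n = (\<lambda>(m,k). pt n m k) ` ({1..n+1} \<times> {1..n div 2 + 1})"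
  unfolding MP_def pt_def image_def by (simp add: Bex_def) blast

lemma MP_memI:
  assumes "even n" "1 \<le> m" "m \<le> n+1" "1 \<le> j" "j \<le> n+2" "odd (m + j)"
  shows "(cos (real m * pi / real (n+2)), cos (real j * pi / real (n+3))) \<in> MP n"
proof (cases "odd m")
  case True
  then have ej: "even j" using assms(6) by auto
  define k where "k = j div 2"
  have jk: "j = 2 * k" using ej by (simp add: k_def)
  have k: "1 \<le> k" "k \<le> n div 2 + 1" using assms jk by auto
  have "(cos (real m * pi / real (n+2)), cos (real j * pi / real (n+3))) = pt n m k"
    unfolding pt_def using True jk by simp
  then show ?thesis unfolding MP_eq using assms k by force
next
  case False
  then have oj: "odd j" using assms(6) by auto
  define k where "k = (j + 1) div 2"
  have jk: "j + 1 = 2 * k" using oj by (simp add: k_def)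
  have "j \<noteq> n + 2" using oj assms(1) by auto
  then have k: "1 \<le> k" "k \<le> n div 2 + 1" using assms jk by auto
  have rj: "real j = 2 * real k - 1" using jk by (simp add: algebra_simps)
  have "(cos (real m * pi / real (n+2)), cos (real j * pi / real (n+3))) = pt n m k"
    unfolding pt_def using False rj by simp
  then show ?thesis unfolding MP_eq using assms k by force
qed

lemma MP_sym:
  assumes "even n" "z \<in> MP n"
  shows "(- fst z, snd z) \<in> MP n"
proof -
  obtain m k where mk: "1 \<le> m" "m \<le> n+1" "1 \<le> k" "k \<le> n div 2 + 1" "z = pt n m k"
    using assms(2) unfolding MP_eq by auto
  define m' where "m' = n + 2 - m"
  have m': "1 \<le> m'" "m' \<le> n+1" using mk by (auto simp: m'_def)
  have par: "odd m' \<longleftrightarrow> odd m" using assms(1) mk by (auto simp: m'_def)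
  have "real m' * pi / real (n+2) = pi - real m * pi / real (n+2)"
    using mk by (simp add: m'_def of_nat_diff field_simps)
  then have "cos (real m' * pi / real (n+2)) = - cos (real m * pi / real (n+2))" by simp
  then have "(- fst z, snd z) = pt n m' k" using mk par unfolding pt_def by simp
  then show ?thesis unfolding MP_eq using m' mk by force
qed

lemma frac_pi: "0 \<le> u \<Longrightarrow> u \<le> v \<Longrightarrow> 0 < v \<Longrightarrow> 0 \<le> u*pi/v \<and> u * pi / v \<le> pi"
proof -
  assume a: "0 \<le> u" "u \<le> v" "0 < v"
  have "u / v \<le> 1" using a by simp
  then have "(u/v) * pi \<le> 1 * pi" by (intro mult_right_mono) auto
  then show ?thesis using a by simp
qed

lemma pt_inj: "inj_on (\<lambda>(m,k). pt n m k) ({1..n+1} \<times> {1..n div 2 + 1})"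
proof (rule inj_onI, clarify)
  fix m k m' k'
  assume A: "m \<in> {1..n+1}" "k \<in> {1..n div 2 + 1}" "m' \<in> {1..n+1}" "k' \<in> {1..n div 2 + 1}"
    and e: "pt n m k = pt n m' k'"
  have "cos (real m * pi / real (n + 2)) = cos (real m' * pi / real (n + 2))"
    using e unfolding pt_def by simp
  moreover have "0 \<le> real m * pi / real (n + 2)" "real m * pi / real (n + 2) \<le> pi"
    "0 \<le> real m' * pi / real (n + 2)" "real m' * pi / real (n + 2) \<le> pi"
    using A frac_pi[of "real m" "real (n+2)"] frac_pi[of "real m'" "real (n+2)"] by auto
  ultimately have "real m * pi / real (n + 2) = real m' * pi / real (n + 2)"
    using cos_inj_pi by blast
  then have mm: "m = m'" by (simp add: field_simps)
  have kb: "2 * real k \<le> real (n+2)" "2 * real k' \<le> real (n+2)" using A by auto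
  show "m = m' \<and> k = k'"
  proof (cases "odd m")
    case True
    then have "cos (2 * real k * pi / real (n + 3)) = cos (2 * real k' * pi / real (n + 3))"
      using e mm unfolding pt_def by simp
    moreover have "0 \<le> 2 * real k * pi / real (n + 3)" "2 * real k * pi / real (n + 3) \<le> pi"
      "0 \<le> 2 * real k' * pi / real (n + 3)" "2 * real k' * pi / real (n + 3) \<le> pi"
      using A kb frac_pi[of "2 * real k" "real (n+3)"] frac_pi[of "2 * real k'" "real (n+3)"] by auto
    ultimately have "2 * real k * pi / real (n + 3) = 2 * real k' * pi / real (n + 3)"
      using cos_inj_pi by blast
    then show ?thesis using mm by (simp add: field_simps)
  next
    case False
    then have "cos ((2 * real k - 1) * pi / real (n + 3)) = cos ((2 * real k' - 1) * pi / real (n + 3))"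
      using e mm unfolding pt_def by simp
    moreover have "0 \<le> (2 * real k - 1) * pi / real (n + 3)" "(2 * real k - 1) * pi / real (n + 3) \<le> pi"
      "0 \<le> (2 * real k' - 1) * pi / real (n + 3)" "(2 * real k' - 1) * pi / real (n + 3) \<le> pi"
      using A kb frac_pi[of "2 * real k - 1" "real (n+3)"] frac_pi[of "2 * real k' - 1" "real (n+3)"] by auto
    ultimately have "(2 * real k - 1) * pi / real (n + 3) = (2 * real k' - 1) * pi / real (n + 3)"
      using cos_inj_pi by blast
    then show ?thesis using mm by (simp add: field_simps)
  qed
qed

lemma card_MP: "card (MP n) = (n+1) * (n div 2 + 1)"
  unfolding MP_eq by (subst card_image[OF pt_inj]) simp

lemma indep_deg:
  fixes P :: "'k \<Rightarrow> real poly" and c :: "'k \<Rightarrow> real"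
  assumes fin: "finite K" and nz: "\<forall>k\<in>K. P k \<noteq> 0"
    and inj: "inj_on (\<lambda>k. degree (P k)) K"
    and sum0: "(\<Sum>k\<in>K. smult (c k) (P k)) = 0"
  shows "\<forall>k\<in>K. c k = 0"
proof (rule ccontr)
  assume H: "\<not> (\<forall>k\<in>K. c k = 0)"
  define K' where "K' = {k\<in>K. c k \<noteq> 0}"
  have K'ne: "K' \<noteq> {}" and finK': "finite K'" using H fin by (auto simp: K'_def)
  define d where "d = Max ((\<lambda>k. degree (P k)) ` K')"
  have "d \<in> (\<lambda>k. degree (P k)) ` K'" unfolding d_def using K'ne finK' by (intro Max_in) auto
  then obtain k0 where k0: "k0 \<in> K'" "degree (P k0) = d" by blast
  have le: "degree (P k) \<le> d" if "k \<in> K'" for k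
    using Max_ge[of "(\<lambda>k. degree (P k)) ` K'"] finK' that unfolding d_def by auto
  have "coeff (\<Sum>k\<in>K. smult (c k) (P k)) d = (\<Sum>k\<in>K. c k * coeff (P k) d)"
    by (simp add: coeff_sum)
  also have "\<dots> = c k0 * coeff (P k0) d + (\<Sum>k\<in>K - {k0}. c k * coeff (P k) d)"
    using k0 fin by (subst sum.remove[of K k0]) (auto simp: K'_def)
  also have "(\<Sum>k\<in>K - {k0}. c k * coeff (P k) d) = 0"
  proof (rule sum.neutral, rule ballI)
    fix k assume k: "k \<in> K - {k0}"
    show "c k * coeff (P k) d = 0"
    proof (cases "c k = 0")
      case False
      then have "k \<in> K'" using k by (auto simp: K'_def)
      then have "degree (P k) \<le> d" by (rule le)
      moreover have "degree (P k) \<noteq> d"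
        using inj k k0 unfolding inj_on_def K'_def by auto
      ultimately show ?thesis by (simp add: coeff_eq_0)
    qed simp
  qed
  finally have "c k0 * lead_coeff (P k0) = 0" using sum0 k0 by simp
  moreover have "c k0 \<noteq> 0" "P k0 \<noteq> 0" using k0 nz by (auto simp: K'_def)
  ultimately show False by simp
qed

definition Iset :: "nat \<Rightarrow> (nat \<times> nat) set" where
  "Iset n = Sigma {..n} (\<lambda>i. {..n-i})"

lemma finite_Iset[simp]: "finite (Iset n)" unfolding Iset_def by auto

definition peval :: "nat \<Rightarrow> (nat \<Rightarrow> nat \<Rightarrow> real) \<Rightarrow> real \<Rightarrow> real \<Rightarrow> real" where
  "peval n c x y = (\<Sum>k\<in>Iset n. c (fst k) (snd k) * x ^ fst k * y ^ snd k)"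

lemma P2_iff: "f \<in> P2 n \<longleftrightarrow> (\<exists>c. \<forall>x y. f (x, y) = peval n c x y)"
proof -
  have "(\<Sum>i\<le>n. \<Sum>j\<le>n - i. c i j * x ^ i * y ^ j) = peval n c x y" for c x y
    unfolding peval_def Iset_def by (subst sum.Sigma) (auto simp: split_def)
  then show ?thesis unfolding P2_def by simp
qed

lemma coeff_zero:
  assumes ev: "even n" and van: "\<forall>z\<in>MP n. peval n c (fst z) (snd z) = 0"
  shows "\<forall>k\<in>Iset n. c (fst k) (snd k) = 0"
proof -
  define a where "a = n + 2"
  define b where "b = n + 3"
  have ab: "a > 0" "b > 0" "b = a + 1" by (auto simp: a_def b_def)
  define Q where "Q = (\<lambda>k. cheb b ^ fst k * (- cheb a) ^ snd k)"
  define R where "R = (\<Sum>k\<in>Iset n. smult (c (fst k) (snd k)) (Q k))"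
  have polyR: "poly R (cos t) = peval n c (cos (real b * t)) (- cos (real a * t))" for t
    unfolding R_def Q_def peval_def poly_sum by (simp add: cheb_cos mult.assoc)
  have degR: "degree R \<le> n * b"
    unfolding R_def
  proof (rule degree_sum_le)
    fix k assume k: "k \<in> Iset n"
    have "degree (smult (c (fst k) (snd k)) (Q k)) \<le> degree (Q k)" by (rule degree_smult_le)
    also have "\<dots> \<le> degree (cheb b ^ fst k) + degree ((- cheb a) ^ snd k)"
      unfolding Q_def by (rule degree_mult_le)
    also have "\<dots> \<le> b * fst k + a * snd k"
      using degree_power_le[of "cheb b" "fst k"] degree_power_le[of "- cheb a" "snd k"]
      by (simp add: cheb_degree)
    also have "\<dots> \<le> b * fst k + b * snd k" using ab by simp
    also have "\<dots> \<le> n * b"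
    proof -
      have "fst k + snd k \<le> n" using k by (auto simp: Iset_def)
      then have "b * (fst k + snd k) \<le> b * n" by (rule mult_le_mono2)
      then show ?thesis by (simp add: algebra_simps)
    qed
    finally show "degree (smult (c (fst k) (snd k)) (Q k)) \<le> n * b" .
  qed simp
  define S where "S = {s\<in>{1..<a*b}. \<not> a dvd s \<and> \<not> b dvd s}"
  define tt where "tt = (\<lambda>s::nat. real s * pi / real (a*b))"
  have root: "poly R (cos (tt s)) = 0" if s: "s \<in> S" for s
  proof -
    have sa: "\<not> a dvd s" and sb: "\<not> b dvd s" using s by (auto simp: S_def)
    obtain m where m: "1 \<le> m" "m < a" "even m \<longleftrightarrow> even s"
      "cos (real s * pi / real a) = cos (real m * pi / real a)"
      using cos_reduce[OF ab(1) sa] by auto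
    obtain m' where m': "1 \<le> m'" "m' < b" "even m' \<longleftrightarrow> even s"
      "cos (real s * pi / real b) = cos (real m' * pi / real b)"
      using cos_reduce[OF ab(2) sb] by auto
    define j where "j = b - m'"
    have j: "1 \<le> j" "j \<le> n + 2" using m' by (auto simp: j_def b_def)
    have "real j * pi / real b = pi - real m' * pi / real b"
      using m' ab by (simp add: j_def of_nat_diff field_simps)
    then have cj: "cos (real j * pi / real b) = - cos (real m' * pi / real b)" by simp
    have "odd (m + j)" using m m' ev by (auto simp: j_def b_def)
    then have mem: "(cos (real m * pi / real (n+2)), cos (real j * pi / real (n+3))) \<in> MP n"
      using MP_memI[OF ev m(1) _ j] m(2) by (auto simp: a_def)
    have e1: "real b * tt s = real s * pi / real a" using ab(1,2) by (simp add: tt_def field_simps)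
    have e2: "real a * tt s = real s * pi / real b" using ab(1,2) by (simp add: tt_def field_simps)
    have "poly R (cos (tt s)) = peval n c (cos (real m * pi / real (n+2))) (cos (real j * pi / real (n+3)))"
      unfolding polyR e1 e2 m(4) m'(4) cj[symmetric] by (simp add: a_def b_def)
    also have "\<dots> = 0" using van mem by auto
    finally show ?thesis .
  qed
  have injS: "inj_on (\<lambda>s. cos (tt s)) S"
  proof (rule inj_onI)
    fix s s' assume s: "s \<in> S" "s' \<in> S" and e: "cos (tt s) = cos (tt s')"
    have "s < a*b" "s' < a*b" using s by (auto simp: S_def)
    then have le: "real s \<le> real (a*b)" "real s' \<le> real (a*b)" by (meson less_imp_le of_nat_le_iff)+
    have abp: "0 < real (a*b)" using ab(1,2) by simp
    have "0 \<le> tt s \<and> tt s \<le> pi" "0 \<le> tt s' \<and> tt s' \<le> pi"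
      using frac_pi[OF _ le(1) abp] frac_pi[OF _ le(2) abp] unfolding tt_def by auto
    then have "tt s = tt s'" using e cos_inj_pi by blast
    then show "s = s'" using abp ab(1,2) by (simp add: tt_def)
  qed
  have cardS: "a*b - 1 \<le> card S + (b - 1) + (a - 1)"
  proof -
    have sub: "{1..<a*b} \<subseteq> S \<union> (\<lambda>k. a*k) ` {1..<b} \<union> (\<lambda>k. b*k) ` {1..<a}"
    proof
      fix s assume s: "s \<in> {1..<a*b}"
      show "s \<in> S \<union> (\<lambda>k. a*k) ` {1..<b} \<union> (\<lambda>k. b*k) ` {1..<a}"
      proof (cases "a dvd s")
        case True
        then obtain k where k: "s = a * k" by auto
        have "k \<noteq> 0" using s k by auto
        moreover have "a * k < a * b" using s k by auto
        ultimately have "1 \<le> k" "k < b" by auto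
        then show ?thesis using k by auto
      next
        case na: False
        show ?thesis
        proof (cases "b dvd s")
          case True
          then obtain k where k: "s = b * k" by auto
          have "k \<noteq> 0" using s k by auto
          moreover have "b * k < b * a" using s k by (simp add: mult.commute)
          ultimately have "1 \<le> k" "k < a" by auto
          then show ?thesis using k by auto
        qed (use s na in \<open>auto simp: S_def\<close>)
      qed
    qed
    have "a*b - 1 = card {1..<a*b}" by simp
    also have "\<dots> \<le> card (S \<union> (\<lambda>k. a*k) ` {1..<b} \<union> (\<lambda>k. b*k) ` {1..<a})"
      by (rule card_mono[OF _ sub]) (auto simp: S_def)
    also have "\<dots> \<le> card S + card ((\<lambda>k. a*k) ` {1..<b}) + card ((\<lambda>k. b*k) ` {1..<a})"
      using card_Un_le[of "S \<union> (\<lambda>k. a*k) ` {1..<b}" "(\<lambda>k. b*k) ` {1..<a}"]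
        card_Un_le[of S "(\<lambda>k. a*k) ` {1..<b}"] by linarith
    also have "\<dots> \<le> card S + (b - 1) + (a - 1)"
      using card_image_le[of "{1..<b}" "\<lambda>k. a*k"] card_image_le[of "{1..<a}" "\<lambda>k. b*k"] by auto
    finally show ?thesis .
  qed
  have R0: "R = 0"
  proof (rule ccontr)
    assume "R \<noteq> 0"
    then have "card {x. poly R x = 0} \<le> degree R" by (rule card_poly_roots_bound)
    moreover have "card ((\<lambda>s. cos (tt s)) ` S) \<le> card {x. poly R x = 0}"
      using root poly_roots_finite[OF \<open>R \<noteq> 0\<close>] by (intro card_mono) auto
    moreover have "card ((\<lambda>s. cos (tt s)) ` S) = card S" using injS by (rule card_image)
    ultimately have "card S \<le> n * b" using degR by linarith
    moreover have "a*b - 1 = n*b + 2 + (b - 1) + (a - 1)" by (simp add: a_def b_def algebra_simps)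
    then have "n * b + 2 \<le> card S" using cardS by linarith
    ultimately show False by linarith
  qed
  have Qnz: "\<forall>k\<in>Iset n. Q k \<noteq> 0" unfolding Q_def using cheb_nz by simp
  have Qdeg: "degree (Q k) = b * fst k + a * snd k" for k
    unfolding Q_def using cheb_nz
    by (simp add: degree_mult_eq degree_power_eq cheb_degree)
  have Qinj: "inj_on (\<lambda>k. degree (Q k)) (Iset n)"
  proof (rule inj_onI)
    fix k k' assume k: "k \<in> Iset n" "k' \<in> Iset n" and e: "degree (Q k) = degree (Q k')"
    have lt: "fst k < a" "fst k' < a" using k by (auto simp: Iset_def a_def)
    have "(fst k + snd k) * a + fst k = (fst k' + snd k') * a + fst k'"
      using e unfolding Qdeg ab(3) by (simp add: algebra_simps)
    then have "((fst k + snd k) * a + fst k) mod a = ((fst k' + snd k') * a + fst k') mod a" by simp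
    then have f: "fst k = fst k'" using lt by simp
    then have "snd k * a = snd k' * a" using e unfolding Qdeg by simp
    then have "snd k = snd k'" using ab by simp
    then show "k = k'" using f by (simp add: prod_eq_iff)
  qed
  show ?thesis
    using indep_deg[OF finite_Iset Qnz Qinj, of "\<lambda>k. c (fst k) (snd k)"] R0 unfolding R_def by simp
qed

lemma sum_Suc_diff: "2 * (\<Sum>i\<le>n. Suc (n - i)) = (n+1)*(n+2)"
proof (induction n)
  case (Suc n)
  have "(\<Sum>i\<le>Suc n. Suc (Suc n - i)) = Suc (Suc n) + (\<Sum>i\<le>n. Suc (n - i))"
    by (subst sum.atMost_Suc_shift) simp
  then show ?case using Suc by (simp add: algebra_simps)
qed simp

lemma card_Iset: "2 * card (Iset n) = (n+1)*(n+2)"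
proof -
  have "card (Iset n) = (\<Sum>i\<le>n. Suc (n - i))" unfolding Iset_def by simp
  then show ?thesis using sum_Suc_diff[of n] by simp
qed

lemma card_eq: "even n \<Longrightarrow> card (Iset n) = card (MP n)"
  using card_Iset[of n] card_MP[of n] by (auto elim!: evenE simp: algebra_simps)

lemma exists_interp:
  fixes g :: "real \<times> real \<Rightarrow> real"
  assumes ev: "even n"
  shows "\<exists>c. \<forall>z\<in>MP n. peval n c (fst z) (snd z) = g z"
proof -
  define N where "N = card (MP n)"
  have finMP: "finite (MP n)" unfolding MP_eq by simp
  obtain hM where hM: "bij_betw hM {0..<N} (MP n)"
    using ex_bij_betw_nat_finite[OF finMP] unfolding N_def by blast
  obtain hI where hI: "bij_betw hI {0..<N} (Iset n)"
    using ex_bij_betw_nat_finite[OF finite_Iset[of n]] card_eq[OF ev] unfolding N_def by auto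
  define A :: "real mat" where "A = mat N N (\<lambda>(r,k). fst (hM r) ^ fst (hI k) * snd (hM r) ^ snd (hI k))"
  have Ac: "A \<in> carrier_mat N N" unfolding A_def by simp
  define cv where "cv = (\<lambda>v :: real vec. \<lambda>i j. if (i,j) \<in> Iset n then v $ (inv_into {0..<N} hI (i,j)) else 0)"
  have key: "peval n (cv v) (fst (hM r)) (snd (hM r)) = (A *\<^sub>v v) $ r"
    if v: "v \<in> carrier_vec N" and r: "r < N" for v r
  proof -
    have "peval n (cv v) (fst (hM r)) (snd (hM r)) =
      (\<Sum>k\<in>Iset n. cv v (fst k) (snd k) * fst (hM r) ^ fst k * snd (hM r) ^ snd k)"
      unfolding peval_def ..
    also have "\<dots> = (\<Sum>k\<in>{0..<N}. cv v (fst (hI k)) (snd (hI k)) * fst (hM r) ^ fst (hI k) * snd (hM r) ^ snd (hI k))"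
      by (rule sum.reindex_bij_betw[OF hI, symmetric])
    also have "\<dots> = (\<Sum>k\<in>{0..<N}. v $ k * (fst (hM r) ^ fst (hI k) * snd (hM r) ^ snd (hI k)))"
    proof (rule sum.cong[OF refl])
      fix k assume k: "k \<in> {0..<N}"
      have "hI k \<in> Iset n" using hI k by (auto simp: bij_betw_def)
      moreover have "inv_into {0..<N} hI (hI k) = k" using hI k by (auto simp: bij_betw_def)
      ultimately show "cv v (fst (hI k)) (snd (hI k)) * fst (hM r) ^ fst (hI k) * snd (hM r) ^ snd (hI k) =
        v $ k * (fst (hM r) ^ fst (hI k) * snd (hM r) ^ snd (hI k))"
        unfolding cv_def by simp
    qed
    also have "\<dots> = (A *\<^sub>v v) $ r"
      using v r unfolding A_def by (auto simp: scalar_prod_def mult.commute intro!: sum.cong)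
    finally show ?thesis .
  qed
  have inj: "v = 0\<^sub>v N" if v: "v \<in> carrier_vec N" and Av: "A *\<^sub>v v = 0\<^sub>v N" for v
  proof -
    have "\<forall>z\<in>MP n. peval n (cv v) (fst z) (snd z) = 0"
    proof
      fix z assume "z \<in> MP n"
      then have "z \<in> hM ` {0..<N}" using hM by (simp add: bij_betw_def)
      then obtain r where r: "r < N" "z = hM r" by auto
      show "peval n (cv v) (fst z) (snd z) = 0" using key[OF v r(1)] Av r by simp
    qed
    then have cz: "\<forall>k\<in>Iset n. cv v (fst k) (snd k) = 0" by (rule coeff_zero[OF ev])
    show ?thesis
    proof (rule eq_vecI)
      fix k assume "k < dim_vec (0\<^sub>v N :: real vec)"
      then have k: "k < N" by simp
      have "hI k \<in> Iset n" using hI k by (auto simp: bij_betw_def)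
      moreover have "inv_into {0..<N} hI (hI k) = k" using hI k by (auto simp: bij_betw_def)
      ultimately have "cv v (fst (hI k)) (snd (hI k)) = v $ k" unfolding cv_def by simp
      then show "v $ k = 0\<^sub>v N $ k" using cz \<open>hI k \<in> Iset n\<close> k by auto
    qed (use v in auto)
  qed
  have "det A \<noteq> 0"
    using inj det_0_iff_vec_prod_zero[OF Ac] by blast
  from det_non_zero_imp_unit[OF Ac this, of "()"]
  obtain B where B: "B \<in> carrier_mat N N" "A * B = 1\<^sub>m N"
    unfolding Units_def ring_mat_def by auto
  define e where "e = vec N (\<lambda>r. g (hM r))"
  have ec: "e \<in> carrier_vec N" unfolding e_def by simp
  define v where "v = B *\<^sub>v e"
  have vc: "v \<in> carrier_vec N" unfolding v_def using B ec by simp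
  have Av: "A *\<^sub>v v = e" unfolding v_def
    using assoc_mult_mat_vec[OF Ac B(1) ec] B(2) ec by simp
  show ?thesis
  proof (intro exI ballI)
    fix z assume "z \<in> MP n"
    then have "z \<in> hM ` {0..<N}" using hM by (simp add: bij_betw_def)
    then obtain r where r: "r < N" "z = hM r" by auto
    show "peval n (cv v) (fst z) (snd z) = g z" using key[OF vc r(1)] Av r by (simp add: e_def)
  qed
qed

lemma uniq:
  assumes ev: "even n" and p1: "p1 \<in> P2 n" and p2: "p2 \<in> P2 n"
    and eq: "\<forall>z\<in>MP n. p1 z = p2 z"
  shows "p1 = p2"
proof -
  obtain c1 where c1: "\<forall>x y. p1 (x, y) = peval n c1 x y" using p1 P2_iff by blast
  obtain c2 where c2: "\<forall>x y. p2 (x, y) = peval n c2 x y" using p2 P2_iff by blast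
  define c where "c = (\<lambda>i j. c1 i j - c2 i j)"
  have pc: "peval n c x y = peval n c1 x y - peval n c2 x y" for x y
    unfolding peval_def c_def by (simp add: sum_subtractf algebra_simps)
  have "\<forall>z\<in>MP n. peval n c (fst z) (snd z) = 0"
    using eq c1 c2 pc by auto
  then have cz: "\<forall>k\<in>Iset n. c (fst k) (snd k) = 0" by (rule coeff_zero[OF ev])
  have pe: "peval n c1 x y = peval n c2 x y" for x y
    unfolding peval_def using cz by (intro sum.cong) (auto simp: c_def)
  show ?thesis
  proof (rule ext)
    fix z :: "real \<times> real"
    obtain x y where z: "z = (x, y)" by (cases z)
    show "p1 z = p2 z" unfolding z using c1 c2 pe by simp
  qed
qed

lemma exist:
  assumes ev: "even n" and a: "a \<in> MP n"
  shows "\<exists>p. p \<in> P2 n \<and> (\<forall>b\<in>MP n. p b = (if b = a then 1 else 0))"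
proof -
  obtain c where c: "\<forall>z\<in>MP n. peval n c (fst z) (snd z) = (if z = a then 1 else 0)"
    using exists_interp[OF ev, of "\<lambda>z. if z = a then 1 else 0"] by blast
  show ?thesis
    by (rule exI[of _ "\<lambda>z. peval n c (fst z) (snd z)"]) (use c in \<open>auto simp: P2_iff\<close>)
qed

lemma L_prop:
  assumes ev: "even n" and a: "a \<in> MP n"
  shows "lagrange_basis n a \<in> P2 n \<and> (\<forall>b\<in>MP n. lagrange_basis n a b = (if b = a then 1 else 0))"
proof -
  obtain p where p: "p \<in> P2 n \<and> (\<forall>b\<in>MP n. p b = (if b = a then 1 else 0))"
    using exist[OF ev a] by blast
  have "\<exists>!p. p \<in> P2 n \<and> (\<forall>b\<in>MP n. p b = (if b = a then 1 else 0))"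
  proof (rule ex1I[of _ p])
    fix q assume q: "q \<in> P2 n \<and> (\<forall>b\<in>MP n. q b = (if b = a then 1 else 0))"
    show "q = p" using uniq[OF ev, of q p] q p by auto
  qed (rule p)
  then show ?thesis unfolding lagrange_basis_def by (rule theI')
qed

lemma P2_sym: "p \<in> P2 n \<Longrightarrow> (\<lambda>z. p (- fst z, snd z)) \<in> P2 n"
proof -
  assume "p \<in> P2 n"
  then obtain c where c: "\<forall>x y. p (x, y) = peval n c x y" using P2_iff by blast
  define c' where "c' = (\<lambda>i j. if even i then c i j else - c i j)"
  have "peval n c (- x) y = peval n c' x y" for x y
    unfolding peval_def c'_def by (intro sum.cong refl) (auto simp: power_minus_odd)
  then show ?thesis using c unfolding P2_iff by auto
qed

lemma L_sym:
  assumes ev: "even n" and a: "a \<in> MP n"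
  shows "lagrange_basis n (- fst a, snd a) (x, y) = lagrange_basis n a (- x, y)"
proof -
  define g where "g = (\<lambda>z. lagrange_basis n a (- fst z, snd z))"
  have a': "(- fst a, snd a) \<in> MP n" using MP_sym[OF ev a] .
  have gP: "g \<in> P2 n" unfolding g_def using L_prop[OF ev a] P2_sym by blast
  have gv: "\<forall>b\<in>MP n. g b = (if b = (- fst a, snd a) then 1 else 0)"
  proof
    fix b assume b: "b \<in> MP n"
    have "(- fst b, snd b) \<in> MP n" using MP_sym[OF ev b] .
    then have "g b = (if (- fst b, snd b) = a then 1 else 0)" unfolding g_def using L_prop[OF ev a] by auto
    moreover have "((- fst b, snd b) = a) \<longleftrightarrow> (b = (- fst a, snd a))" by (auto simp: prod_eq_iff)
    ultimately show "g b = (if b = (- fst a, snd a) then 1 else 0)" by simp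
  qed
  have "lagrange_basis n (- fst a, snd a) = g"
    using L_prop[OF ev a'] gP gv uniq[OF ev, of "lagrange_basis n (- fst a, snd a)" g] by auto
  then show ?thesis unfolding g_def by simp
qed

theorem lemma5:
  fixes n :: nat and x y :: real
  assumes "n > 0" and "even n"
    and "x \<in> {-1..1}" and "y \<in> {-1..1}"
  shows "lebesgue_fun n x y = lebesgue_fun n (-x) y"
proof -
  have "(\<Sum>a\<in>MP n. \<bar>lagrange_basis n a (- x, y)\<bar>) = (\<Sum>a\<in>MP n. \<bar>lagrange_basis n a (x, y)\<bar>)"
  proof (rule sum.reindex_bij_witness[where i = "\<lambda>z. (- fst z, snd z)" and j = "\<lambda>z. (- fst z, snd z)"])
    fix a assume a: "a \<in> MP n"
    show "(- fst (- fst a, snd a), snd (- fst a, snd a)) = a" by simp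
    show "(- fst a, snd a) \<in> MP n" using MP_sym[OF assms(2) a] .
    show "\<bar>lagrange_basis n (- fst a, snd a) (x, y)\<bar> = \<bar>lagrange_basis n a (- x, y)\<bar>"
      using L_sym[OF assms(2) a] by simp
  next
    fix b assume b: "b \<in> MP n"
    show "(- fst (- fst b, snd b), snd (- fst b, snd b)) = b" by simp
    show "(- fst b, snd b) \<in> MP n" using MP_sym[OF assms(2) b] .
  qed
  then show ?thesis unfolding lebesgue_fun_def by simp
qed

end
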